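(* Let $\mathbf i=(I,\varepsilon,d)$ be a feed, $k\in I$, and $\mathbf i'=(I,\varepsilon',d)$ its mutation in direction $k$. Equip the torus $\mathcal D_{\mathbf i}$ with coordinates $(B_i,X_i)_{i\in I}$ and the Poisson structure $$\{B_i,B_j\}=0,\quad \{X_i,B_j\}=d_i^{-1}\delta_{ij}X_iB_j,\quad \{X_i,X_j\}=\widehat\varepsilon_{ij}X_iX_j,$$ and the torus $\mathcal D_{\mathbf i'}$ with coordinates $(B'_i,X'_i)$ and the same structure with $\widehat\varepsilon'_{ij}=\varepsilon'_{ij}d_j^{-1}$; equip the torus $\mathcal X_{\mathbf i}$ with coordinates $X_i$ and bracket $\{X_i,X_j\}=\widehat\varepsilon_{ij}X_iX_j$, and $\mathcal X_{\mathbf i'}$ likewise with $\widehat\varepsilon'$. Let $\mu'_k:\mathcal D_{\mathbf i}\to\mathcal D_{\mathbf i'}$ be the isomorphism given by $$(\mu'_k)^*B'_i=B_i\ (i\ne k),\quad (\mu'_k)^*B'_k=\mathbb B_k^-/B_k,\quad (\mu'_k)^*X'_k=X_k^{-1},\quad (\mu'_k)^*X'_i=X_iX_k^{[\varepsilon_{ik}]_+}\ (i\neq k),$$ and $\mu'_k:\mathcal X_{\mathbf i}\to\mathcal X_{\mathbf i'}$ the isomorphism given by the last two formulas. Then both maps $\mu'_k$ are Poisson maps.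
   Context: A feed $\mathbf i=(I,\varepsilon,d)$: $I$ a finite set, $\varepsilon=(\varepsilon_{ij})_{i,j\in I}$ an integer matrix, $d=(d_i)$ positive integers such that $\widehat\varepsilon_{ij}:=\varepsilon_{ij}d_j^{-1}$ is skew-symmetric. Its mutation in direction $k$ is $\mathbf i'=(I,\varepsilon',d)$ with $\varepsilon'_{ij}=-\varepsilon_{ij}$ if $i=k$ or $j=k$; $\varepsilon'_{ij}=\varepsilon_{ij}$ if $\varepsilon_{ik}\varepsilon_{kj}\le0$; $\varepsilon'_{ij}=\varepsilon_{ij}+|\varepsilon_{ik}|\varepsilon_{kj}$ if $\varepsilon_{ik}\varepsilon_{kj}>0$. Notation: $[\alpha]_+=\max(\alpha,0)$, $\mathbb B_k^-:=\prod_{j:\varepsilon_{kj}<0}B_j^{-\varepsilon_{kj}}$, $\delta_{ij}$ the Kronecker delta. All tori are split algebraic tori $\mathbb G_m^{I}$ (resp. $\mathbb G_m^{2|I|}$). *)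

theory Defs
  imports Complex_Main
begin

text \<open>The coordinate ring of the split torus with coordinates indexed by a finite type 'v
  over a field 'k of characteristic 0 is the Laurent polynomial ring
  'k[x_v^{+-1}], represented as finitely supported functions from exponent
  vectors ('v => int) to coefficients.\<close>

definition laurent :: "(('v \<Rightarrow> int) \<Rightarrow> 'k::zero) \<Rightarrow> bool" where
  "laurent f \<longleftrightarrow> finite {a. f a \<noteq> 0}"

definition lmult :: "(('v \<Rightarrow> int) \<Rightarrow> 'k::comm_ring_1) \<Rightarrow> (('v \<Rightarrow> int) \<Rightarrow> 'k) \<Rightarrow> (('v \<Rightarrow> int) \<Rightarrow> 'k)" where
  "lmult f g = (\<lambda>c. \<Sum>p\<in>{(a, b). f a \<noteq> 0 \<and> g b \<noteq> 0 \<and> (\<lambda>i. a i + b i) = c}. f (fst p) * g (snd p))"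

definition euler :: "'v \<Rightarrow> (('v \<Rightarrow> int) \<Rightarrow> 'k::comm_ring_1) \<Rightarrow> (('v \<Rightarrow> int) \<Rightarrow> 'k)" where
  "euler i f = (\<lambda>a. of_int (a i) * f a)"

text \<open>The (log-canonical) Poisson bracket on the torus with {x_i,x_j} = Omega_ij x_i x_j:
  {f,g} = sum_{i,j} Omega_ij x_i x_j (d_i f)(d_j g).\<close>
definition lbracket :: "('v::finite \<Rightarrow> 'v \<Rightarrow> 'k::comm_ring_1) \<Rightarrow> (('v \<Rightarrow> int) \<Rightarrow> 'k) \<Rightarrow> (('v \<Rightarrow> int) \<Rightarrow> 'k) \<Rightarrow> (('v \<Rightarrow> int) \<Rightarrow> 'k)" where
  "lbracket \<Omega> f g = (\<lambda>c. \<Sum>i\<in>UNIV. \<Sum>j\<in>UNIV. \<Omega> i j * lmult (euler i f) (euler j g) c)"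

text \<open>A monomial map of tori, from the torus with coordinates 'v to the one with
  coordinates 'w, given by m w = exponent vector of the pullback of the coordinate x'_w.
  expmap m a is the exponent vector of the pullback of the monomial x'^a.\<close>
definition expmap :: "('w::finite \<Rightarrow> ('v \<Rightarrow> int)) \<Rightarrow> ('w \<Rightarrow> int) \<Rightarrow> ('v \<Rightarrow> int)" where
  "expmap m a = (\<lambda>v. \<Sum>w\<in>UNIV. a w * m w v)"

definition pullback :: "('w::finite \<Rightarrow> ('v \<Rightarrow> int)) \<Rightarrow> (('w \<Rightarrow> int) \<Rightarrow> 'k::comm_ring_1) \<Rightarrow> (('v \<Rightarrow> int) \<Rightarrow> 'k)" where
  "pullback m f = (\<lambda>c. \<Sum>a\<in>{a. f a \<noteq> 0 \<and> expmap m a = c}. f a)"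

definition poisson_map :: "('v::finite \<Rightarrow> 'v \<Rightarrow> 'k::comm_ring_1) \<Rightarrow> ('w::finite \<Rightarrow> 'w \<Rightarrow> 'k) \<Rightarrow> ('w \<Rightarrow> ('v \<Rightarrow> int)) \<Rightarrow> bool" where
  "poisson_map \<Omega> \<Omega>' m \<longleftrightarrow>
     (\<forall>f g. laurent f \<longrightarrow> laurent g \<longrightarrow>
        pullback m (lbracket \<Omega>' f g) = lbracket \<Omega> (pullback m f) (pullback m g))"

definition is_feed :: "('i::finite \<Rightarrow> 'i \<Rightarrow> int) \<Rightarrow> ('i \<Rightarrow> int) \<Rightarrow> bool" where
  "is_feed \<epsilon> d \<longleftrightarrow> (\<forall>i. d i > 0) \<and>
     (\<forall>i j. (of_int (\<epsilon> i j) / of_int (d j) :: rat) = - (of_int (\<epsilon> j i) / of_int (d i)))"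

definition mut_eps :: "('i \<Rightarrow> 'i \<Rightarrow> int) \<Rightarrow> 'i \<Rightarrow> 'i \<Rightarrow> 'i \<Rightarrow> int" where
  "mut_eps \<epsilon> k i j =
     (if i = k \<or> j = k then - \<epsilon> i j
      else if \<epsilon> i k * \<epsilon> k j \<le> 0 then \<epsilon> i j
      else \<epsilon> i j + \<bar>\<epsilon> i k\<bar> * \<epsilon> k j)"

definition eps_hat :: "('i \<Rightarrow> 'i \<Rightarrow> int) \<Rightarrow> ('i \<Rightarrow> int) \<Rightarrow> 'i \<Rightarrow> 'i \<Rightarrow> 'k::field" where
  "eps_hat \<epsilon> d i j = of_int (\<epsilon> i j) / of_int (d j)"

definition omegaX :: "('i \<Rightarrow> 'i \<Rightarrow> int) \<Rightarrow> ('i \<Rightarrow> int) \<Rightarrow> 'i \<Rightarrow> 'i \<Rightarrow> 'k::field" where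
  "omegaX \<epsilon> d = eps_hat \<epsilon> d"

text \<open>Poisson structure on D_i, coordinates Inl i = B_i, Inr i = X_i:
  {B_i,B_j} = 0, {X_i,B_j} = d_i^{-1} delta_ij X_i B_j, {X_i,X_j} = eps_hat_ij X_i X_j
  (and {B_j,X_i} = - {X_i,B_j} by skew-symmetry).\<close>
definition omegaD :: "('i \<Rightarrow> 'i \<Rightarrow> int) \<Rightarrow> ('i \<Rightarrow> int) \<Rightarrow> ('i + 'i) \<Rightarrow> ('i + 'i) \<Rightarrow> 'k::field" where
  "omegaD \<epsilon> d u v = (case (u, v) of
      (Inl i, Inl j) \<Rightarrow> 0
    | (Inr i, Inl j) \<Rightarrow> (if i = j then 1 / of_int (d i) else 0)
    | (Inl i, Inr j) \<Rightarrow> (if i = j then - (1 / of_int (d j)) else 0)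
    | (Inr i, Inr j) \<Rightarrow> eps_hat \<epsilon> d i j)"

definition muX :: "('i \<Rightarrow> 'i \<Rightarrow> int) \<Rightarrow> 'i \<Rightarrow> 'i \<Rightarrow> ('i \<Rightarrow> int)" where
  "muX \<epsilon> k i = (if i = k then (\<lambda>v. if v = k then -1 else 0)
     else (\<lambda>v. if v = i then 1 else if v = k then max (\<epsilon> i k) 0 else 0))"

text \<open>The map mu'_k on D-tori: (mu'_k)^* B'_i = B_i (i ~= k),
  (mu'_k)^* B'_k = (prod_{eps_kj<0} B_j^{-eps_kj}) / B_k, and the X-formulas as above.\<close>
definition muD :: "('i \<Rightarrow> 'i \<Rightarrow> int) \<Rightarrow> 'i \<Rightarrow> ('i + 'i) \<Rightarrow> (('i + 'i) \<Rightarrow> int)" where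
  "muD \<epsilon> k u = (case u of
      Inl i \<Rightarrow> (if i = k then
                  (\<lambda>v. case v of
                        Inl j \<Rightarrow> (if \<epsilon> k j < 0 then - \<epsilon> k j else 0) - (if j = k then 1 else 0)
                      | Inr j \<Rightarrow> 0)
                else (\<lambda>v. if v = Inl i then 1 else 0))
    | Inr i \<Rightarrow> (if i = k then (\<lambda>v. if v = Inr k then -1 else 0)
                else (\<lambda>v. if v = Inr i then 1 else if v = Inr k then max (\<epsilon> i k) 0 else 0)))"

end

theory Submission
  imports Defs
begin


definition bil :: "('v::finite \<Rightarrow> 'v \<Rightarrow> 'k::comm_ring_1) \<Rightarrow> ('v\<Rightarrow>int) \<Rightarrow> ('v\<Rightarrow>int) \<Rightarrow> 'k" where
  "bil \<Omega> a b = (\<Sum>i\<in>UNIV. \<Sum>j\<in>UNIV. \<Omega> i j * (of_int (a i) * of_int (b j)))"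

definition padd :: "('v \<Rightarrow> int) \<times> ('v \<Rightarrow> int) \<Rightarrow> ('v \<Rightarrow> int)" where
  "padd p = (\<lambda>i. fst p i + snd p i)"

lemma lmult_eq:
  fixes f g :: "('v \<Rightarrow> int) \<Rightarrow> 'k::comm_ring_1"
  assumes "finite A" "finite B" "{a. f a \<noteq> 0} \<subseteq> A" "{b. g b \<noteq> 0} \<subseteq> B"
  shows "lmult f g c = (\<Sum>p\<in>{p\<in>A\<times>B. padd p = c}. f (fst p) * g (snd p))"
  unfolding lmult_def padd_def
proof (rule sum.mono_neutral_left)
  show "finite {p \<in> A \<times> B. (\<lambda>i. fst p i + snd p i) = c}"
    using assms(1,2) by (auto intro: finite_subset)
  show "{(a, b). f a \<noteq> 0 \<and> g b \<noteq> 0 \<and> (\<lambda>i. a i + b i) = c} \<subseteq> {p \<in> A \<times> B. (\<lambda>i. fst p i + snd p i) = c}"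
    using assms(3,4) by auto
  show "\<forall>i\<in>{p \<in> A \<times> B. (\<lambda>i. fst p i + snd p i) = c} - {(a, b). f a \<noteq> 0 \<and> g b \<noteq> 0 \<and> (\<lambda>i. a i + b i) = c}.
       f (fst i) * g (snd i) = 0" by auto
qed

lemma lbracket_eq:
  fixes f g :: "('v::finite \<Rightarrow> int) \<Rightarrow> 'k::comm_ring_1"
  assumes "finite A" "finite B" "{a. f a \<noteq> 0} \<subseteq> A" "{b. g b \<noteq> 0} \<subseteq> B"
  shows "lbracket \<Omega> f g c = (\<Sum>p\<in>{p\<in>A\<times>B. padd p = c}. bil \<Omega> (fst p) (snd p) * (f (fst p) * g (snd p)))"
proof -
  let ?P = "{p\<in>A\<times>B. padd p = c}"
  have e: "lmult (euler i f) (euler j g) c = (\<Sum>p\<in>?P. of_int (fst p i) * f (fst p) * (of_int (snd p j) * g (snd p)))" for i j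
    by (subst lmult_eq[OF assms(1,2)]) (use assms(3,4) in \<open>auto simp: euler_def\<close>)
  have "lbracket \<Omega> f g c = (\<Sum>i\<in>UNIV. \<Sum>j\<in>UNIV. \<Sum>p\<in>?P. \<Omega> i j * (of_int (fst p i) * f (fst p) * (of_int (snd p j) * g (snd p))))"
    unfolding lbracket_def e by (simp add: sum_distrib_left)
  also have "\<dots> = (\<Sum>i\<in>UNIV. \<Sum>p\<in>?P. \<Sum>j\<in>UNIV. \<Omega> i j * (of_int (fst p i) * f (fst p) * (of_int (snd p j) * g (snd p))))"
    by (rule sum.cong[OF refl], rule sum.swap)
  also have "\<dots> = (\<Sum>p\<in>?P. \<Sum>i\<in>UNIV. \<Sum>j\<in>UNIV. \<Omega> i j * (of_int (fst p i) * f (fst p) * (of_int (snd p j) * g (snd p))))"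
    by (rule sum.swap)
  also have "\<dots> = (\<Sum>p\<in>?P. bil \<Omega> (fst p) (snd p) * (f (fst p) * g (snd p)))"
    unfolding bil_def by (simp add: sum_distrib_right sum_distrib_left mult_ac)
  finally show ?thesis .
qed

lemma pullback_eq:
  fixes f :: "('w::finite \<Rightarrow> int) \<Rightarrow> 'k::comm_ring_1"
  assumes "finite A" "{a. f a \<noteq> 0} \<subseteq> A"
  shows "pullback m f c = (\<Sum>a\<in>{a\<in>A. expmap m a = c}. f a)"
  unfolding pullback_def
  by (rule sum.mono_neutral_left) (use assms in auto)

lemma expmap_add: "expmap m (padd p) = padd (expmap m (fst p), expmap m (snd p))"
  unfolding expmap_def padd_def by (auto simp: sum.distrib algebra_simps)

lemma poisson_of_bil:
  fixes \<Omega> :: "'v::finite \<Rightarrow> 'v \<Rightarrow> 'k::comm_ring_1" and \<Omega>' :: "'w::finite \<Rightarrow> 'w \<Rightarrow> 'k"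
  assumes H: "\<And>a b. bil \<Omega> (expmap m a) (expmap m b) = bil \<Omega>' a b"
  shows "poisson_map \<Omega> \<Omega>' m"
  unfolding poisson_map_def
proof (intro allI impI)
  fix f g :: "('w \<Rightarrow> int) \<Rightarrow> 'k"
  assume lf: "laurent f" and lg: "laurent g"
  define Sf where "Sf = {a. f a \<noteq> 0}"
  define Sg where "Sg = {a. g a \<noteq> 0}"
  have fSf: "finite Sf" and fSg: "finite Sg" using lf lg by (auto simp: laurent_def Sf_def Sg_def)
  define h where "h p = bil \<Omega>' (fst p) (snd p) * (f (fst p) * g (snd p))" for p
  define T where "T = padd ` (Sf \<times> Sg)"
  have fT: "finite T" using fSf fSg by (simp add: T_def)
  have sT: "{x. lbracket \<Omega>' f g x \<noteq> 0} \<subseteq> T"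
  proof
    fix x assume "x \<in> {x. lbracket \<Omega>' f g x \<noteq> 0}"
    then have "lbracket \<Omega>' f g x \<noteq> 0" by simp
    moreover have "lbracket \<Omega>' f g x = (\<Sum>p\<in>{p\<in>Sf\<times>Sg. padd p = x}. h p)"
      using lbracket_eq[OF fSf fSg, of f g \<Omega>' x] by (simp add: Sf_def Sg_def h_def)
    ultimately have "{p\<in>Sf\<times>Sg. padd p = x} \<noteq> {}" by force
    then show "x \<in> T" by (auto simp: T_def)
  qed
  define U where "U = expmap m ` Sf"
  define V where "V = expmap m ` Sg"
  have fU: "finite U" "finite V" using fSf fSg by (auto simp: U_def V_def)
  have pfe: "pullback m f u = (\<Sum>a\<in>{a\<in>Sf. expmap m a = u}. f a)" for u
    by (rule pullback_eq[OF fSf]) (simp add: Sf_def)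
  have pge: "pullback m g u = (\<Sum>a\<in>{a\<in>Sg. expmap m a = u}. g a)" for u
    by (rule pullback_eq[OF fSg]) (simp add: Sg_def)
  have sU: "{a. pullback m f a \<noteq> 0} \<subseteq> U"
  proof
    fix u assume "u \<in> {a. pullback m f a \<noteq> 0}"
    then have "{a\<in>Sf. expmap m a = u} \<noteq> {}" using pfe[of u] by force
    then show "u \<in> U" by (auto simp: U_def)
  qed
  have sV: "{a. pullback m g a \<noteq> 0} \<subseteq> V"
  proof
    fix u assume "u \<in> {a. pullback m g a \<noteq> 0}"
    then have "{a\<in>Sg. expmap m a = u} \<noteq> {}" using pge[of u] by force
    then show "u \<in> V" by (auto simp: V_def)
  qed
  show "pullback m (lbracket \<Omega>' f g) = lbracket \<Omega> (pullback m f) (pullback m g)"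
  proof
    fix c
    define G where "G p = (expmap m (fst p), expmap m (snd p))" for p :: "('w \<Rightarrow> int) \<times> ('w \<Rightarrow> int)"
    have "pullback m (lbracket \<Omega>' f g) c = (\<Sum>x\<in>{x\<in>T. expmap m x = c}. lbracket \<Omega>' f g x)"
      by (rule pullback_eq[OF fT sT])
    also have "\<dots> = (\<Sum>x\<in>{x\<in>T. expmap m x = c}. \<Sum>p\<in>{p\<in>{p\<in>Sf\<times>Sg. expmap m (padd p) = c}. padd p = x}. h p)"
    proof (rule sum.cong[OF refl])
      fix x assume "x \<in> {x\<in>T. expmap m x = c}"
      then have "{p\<in>Sf\<times>Sg. padd p = x} = {p\<in>{p\<in>Sf\<times>Sg. expmap m (padd p) = c}. padd p = x}" by auto
      then show "lbracket \<Omega>' f g x = (\<Sum>p\<in>{p\<in>{p\<in>Sf\<times>Sg. expmap m (padd p) = c}. padd p = x}. h p)"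
        using lbracket_eq[OF fSf fSg, of f g \<Omega>' x] by (simp add: Sf_def Sg_def h_def)
    qed
    also have "\<dots> = (\<Sum>p\<in>{p\<in>Sf\<times>Sg. expmap m (padd p) = c}. h p)"
      by (rule sum.group) (use fT fSf fSg in \<open>auto simp: T_def\<close>)
    finally have L: "pullback m (lbracket \<Omega>' f g) c = (\<Sum>p\<in>{p\<in>Sf\<times>Sg. expmap m (padd p) = c}. h p)" .
    have "lbracket \<Omega> (pullback m f) (pullback m g) c =
       (\<Sum>q\<in>{q\<in>U\<times>V. padd q = c}. bil \<Omega> (fst q) (snd q) * (pullback m f (fst q) * pullback m g (snd q)))"
      by (rule lbracket_eq[OF fU sU sV])
    also have "\<dots> = (\<Sum>q\<in>{q\<in>U\<times>V. padd q = c}. \<Sum>p\<in>{p\<in>{p\<in>Sf\<times>Sg. expmap m (padd p) = c}. G p = q}. h p)"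
    proof (rule sum.cong[OF refl])
      fix q assume q: "q \<in> {q\<in>U\<times>V. padd q = c}"
      have "pullback m f (fst q) * pullback m g (snd q) = (\<Sum>p\<in>{a\<in>Sf. expmap m a = fst q}\<times>{a\<in>Sg. expmap m a = snd q}. f (fst p) * g (snd p))"
        unfolding pfe pge sum_product sum.cartesian_product by (simp add: case_prod_beta)
      moreover have "{a\<in>Sf. expmap m a = fst q}\<times>{a\<in>Sg. expmap m a = snd q} = {p\<in>{p\<in>Sf\<times>Sg. expmap m (padd p) = c}. G p = q}"
        using q by (auto simp: G_def expmap_add)
      ultimately have "bil \<Omega> (fst q) (snd q) * (pullback m f (fst q) * pullback m g (snd q)) =
          (\<Sum>p\<in>{p\<in>{p\<in>Sf\<times>Sg. expmap m (padd p) = c}. G p = q}. bil \<Omega> (fst q) (snd q) * (f (fst p) * g (snd p)))"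
        by (simp add: sum_distrib_left)
      also have "\<dots> = (\<Sum>p\<in>{p\<in>{p\<in>Sf\<times>Sg. expmap m (padd p) = c}. G p = q}. h p)"
        by (rule sum.cong[OF refl]) (auto simp: h_def G_def H)
      finally show "bil \<Omega> (fst q) (snd q) * (pullback m f (fst q) * pullback m g (snd q)) = \<dots>" .
    qed
    also have "\<dots> = (\<Sum>p\<in>{p\<in>Sf\<times>Sg. expmap m (padd p) = c}. h p)"
      by (rule sum.group) (use fU fSf fSg in \<open>auto simp: U_def V_def G_def expmap_add\<close>)
    finally show "pullback m (lbracket \<Omega>' f g) c = lbracket \<Omega> (pullback m f) (pullback m g) c"
      using L by simp
  qed
qed




lemma swap4:
  "(\<Sum>i\<in>A. \<Sum>j\<in>B. \<Sum>x\<in>C. \<Sum>y\<in>D. F i j x y) = (\<Sum>x\<in>C. \<Sum>y\<in>D. \<Sum>i\<in>A. \<Sum>j\<in>B. F i j x y)"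
proof -
  have "(\<Sum>i\<in>A. \<Sum>j\<in>B. \<Sum>x\<in>C. \<Sum>y\<in>D. F i j x y) = (\<Sum>i\<in>A. \<Sum>x\<in>C. \<Sum>j\<in>B. \<Sum>y\<in>D. F i j x y)"
    by (rule sum.cong[OF refl], rule sum.swap)
  also have "\<dots> = (\<Sum>x\<in>C. \<Sum>i\<in>A. \<Sum>j\<in>B. \<Sum>y\<in>D. F i j x y)" by (rule sum.swap)
  also have "\<dots> = (\<Sum>x\<in>C. \<Sum>i\<in>A. \<Sum>y\<in>D. \<Sum>j\<in>B. F i j x y)"
    by (rule sum.cong[OF refl], rule sum.cong[OF refl], rule sum.swap)
  also have "\<dots> = (\<Sum>x\<in>C. \<Sum>y\<in>D. \<Sum>i\<in>A. \<Sum>j\<in>B. F i j x y)"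
    by (rule sum.cong[OF refl], rule sum.swap)
  finally show ?thesis .
qed

lemma bil_expmap:
  fixes \<Omega> :: "'v::finite \<Rightarrow> 'v \<Rightarrow> 'k::comm_ring_1" and m :: "'w::finite \<Rightarrow> 'v \<Rightarrow> int"
  shows "bil \<Omega> (expmap m a) (expmap m b) = (\<Sum>x\<in>UNIV. \<Sum>y\<in>UNIV. of_int (a x) * of_int (b y) * bil \<Omega> (m x) (m y))"
proof -
  have "bil \<Omega> (expmap m a) (expmap m b) = (\<Sum>i\<in>UNIV. \<Sum>j\<in>UNIV. \<Sum>x\<in>UNIV. \<Sum>y\<in>UNIV.
      of_int (a x) * of_int (b y) * (\<Omega> i j * (of_int (m x i) * of_int (m y j))))"
    unfolding bil_def expmap_def of_int_sum of_int_mult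
    unfolding sum_product
    unfolding sum_distrib_left
    by (intro sum.cong refl) (simp add: mult_ac)
  also have "\<dots> = (\<Sum>x\<in>UNIV. \<Sum>y\<in>UNIV. \<Sum>i\<in>UNIV. \<Sum>j\<in>UNIV.
      of_int (a x) * of_int (b y) * (\<Omega> i j * (of_int (m x i) * of_int (m y j))))"
    by (rule swap4)
  also have "\<dots> = (\<Sum>x\<in>UNIV. \<Sum>y\<in>UNIV. of_int (a x) * of_int (b y) * bil \<Omega> (m x) (m y))"
    unfolding bil_def sum_distrib_left by simp
  finally show ?thesis .
qed

lemma poisson_of_entries:
  fixes \<Omega> :: "'v::finite \<Rightarrow> 'v \<Rightarrow> 'k::comm_ring_1" and \<Omega>' :: "'w::finite \<Rightarrow> 'w \<Rightarrow> 'k"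
  assumes "\<And>x y. bil \<Omega> (m x) (m y) = \<Omega>' x y"
  shows "poisson_map \<Omega> \<Omega>' m"
  by (rule poisson_of_bil) (simp only: bil_expmap assms, simp add: bil_def mult_ac)

lemma sum_delta2:
  fixes F :: "'v::finite \<Rightarrow> 'k::comm_ring_1"
  shows "(\<Sum>v\<in>UNIV. F v * of_int ((if v = p then 1 else 0) + (if v = q then c else 0))) = F p + of_int c * F q"
proof -
  have "(\<Sum>v\<in>UNIV. F v * of_int ((if v = p then 1 else 0) + (if v = q then c else 0)))
     = (\<Sum>v\<in>UNIV. (if v = p then F v else 0)) + (\<Sum>v\<in>UNIV. (if v = q then of_int c * F v else 0))"
    by (subst sum.distrib[symmetric]) (rule sum.cong, auto simp: algebra_simps)
  then show ?thesis by simp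
qed

lemma bil_left: "bil \<Omega> a b = (\<Sum>i\<in>UNIV. of_int (a i) * (\<Sum>j\<in>UNIV. \<Omega> i j * of_int (b j)))"
  unfolding bil_def sum_distrib_left by (simp add: mult_ac)

lemma bil_delta:
  fixes \<Omega> :: "'v::finite \<Rightarrow> 'v \<Rightarrow> 'k::comm_ring_1"
  shows "bil \<Omega> (\<lambda>v. (if v = i then 1 else 0) + (if v = k then c else 0))
                 (\<lambda>v. (if v = j then 1 else 0) + (if v = k then c' else 0))
       = \<Omega> i j + of_int c' * \<Omega> i k + of_int c * \<Omega> k j + of_int c * of_int c' * \<Omega> k k"
  unfolding bil_left sum_delta2
  by (subst mult.commute, subst sum_delta2) (simp add: algebra_simps)




definition cX :: "('i \<Rightarrow> 'i \<Rightarrow> int) \<Rightarrow> 'i \<Rightarrow> 'i \<Rightarrow> int" where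
  "cX \<epsilon> k w = (if w = k then -2 else max (\<epsilon> w k) 0)"

context
  fixes \<epsilon> :: "'i::finite \<Rightarrow> 'i \<Rightarrow> int" and d :: "'i \<Rightarrow> int"
  assumes feed: "is_feed \<epsilon> d"
begin

lemma dpos: "d i > 0" using feed by (simp add: is_feed_def)

lemma skq: "(of_int (\<epsilon> i j) / of_int (d j) :: 'k::field_char_0) = - (of_int (\<epsilon> j i) / of_int (d i))"
proof -
  have "(of_int (\<epsilon> i j) / of_int (d j) :: rat) = - (of_int (\<epsilon> j i) / of_int (d i))"
    using feed unfolding is_feed_def by blast
  then have "(of_rat (of_int (\<epsilon> i j) / of_int (d j)) :: 'k) = of_rat (- (of_int (\<epsilon> j i) / of_int (d i)))"
    by simp
  then show ?thesis by (simp add: of_rat_divide of_rat_minus)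
qed

lemma ski: "\<epsilon> i j * d i = - (\<epsilon> j i * d j)"
proof -
  have "(of_int (\<epsilon> i j) / of_int (d j) :: rat) = - (of_int (\<epsilon> j i) / of_int (d i))"
    using feed unfolding is_feed_def by blast
  then have "(of_int (\<epsilon> i j * d i) :: rat) = of_int (- (\<epsilon> j i * d j))"
    using dpos[of i] dpos[of j] by (simp add: field_simps)
  then show ?thesis by (simp only: of_int_eq_iff)
qed

lemma sgn_pos: "\<epsilon> j i > 0 \<longleftrightarrow> \<epsilon> i j < 0"
proof -
  have a: "\<epsilon> i j * d i = - (\<epsilon> j i * d j)" by (rule ski)
  have "\<epsilon> j i > 0 \<longleftrightarrow> \<epsilon> j i * d j > 0" using dpos[of j] by (simp add: zero_less_mult_iff)
  also have "\<dots> \<longleftrightarrow> \<epsilon> i j * d i < 0" using a by linarith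
  also have "\<dots> \<longleftrightarrow> \<epsilon> i j < 0" using dpos[of i] by (simp add: mult_less_0_iff)
  finally show ?thesis .
qed

lemma ekk: "\<epsilon> i i = 0"
  using ski[of i i] dpos[of i] by simp

lemma ehkk: "eps_hat \<epsilon> d i i = (0::'k::field_char_0)"
  by (simp add: eps_hat_def ekk)


lemma muX_alt: "muX \<epsilon> k w = (\<lambda>v. (if v = w then 1 else 0) + (if v = k then cX \<epsilon> k w else 0))"
  by (auto simp: muX_def cX_def)

lemma X_entry:
  "bil (eps_hat \<epsilon> d :: 'i \<Rightarrow> 'i \<Rightarrow> 'k::field_char_0) (muX \<epsilon> k i) (muX \<epsilon> k j) = eps_hat (mut_eps \<epsilon> k) d i j"
proof -
  have dnz: "(of_int (d x) :: 'k) \<noteq> 0" for x using dpos[of x] by simp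
  have L: "bil (eps_hat \<epsilon> d :: 'i \<Rightarrow> 'i \<Rightarrow> 'k) (muX \<epsilon> k i) (muX \<epsilon> k j) =
     eps_hat \<epsilon> d i j + of_int (cX \<epsilon> k j) * eps_hat \<epsilon> d i k + of_int (cX \<epsilon> k i) * eps_hat \<epsilon> d k j"
    unfolding muX_alt bil_delta by (simp add: ehkk)
  show ?thesis
  proof (cases "i = k")
    case True
    then show ?thesis unfolding L
      by (cases "j = k") (auto simp: cX_def mut_eps_def eps_hat_def ehkk ekk)
  next
    case ik: False
    show ?thesis
    proof (cases "j = k")
      case True
      then show ?thesis unfolding L using ik
        by (auto simp: cX_def mut_eps_def eps_hat_def ehkk ekk)
    next
      case jk: False
      have sk1: "(of_int (\<epsilon> j k) / of_int (d k) :: 'k) = - (of_int (\<epsilon> k j) / of_int (d j))" by (rule skq)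
      show ?thesis unfolding L
      proof (cases "\<epsilon> i k > 0")
        case p1: True
        show "eps_hat \<epsilon> d i j + of_int (cX \<epsilon> k j) * eps_hat \<epsilon> d i k + of_int (cX \<epsilon> k i) * eps_hat \<epsilon> d k j =
          (eps_hat (mut_eps \<epsilon> k) d i j :: 'k)"
        proof (cases "\<epsilon> k j > 0")
          case True
          then have "\<not> \<epsilon> j k > 0" using sgn_pos[of k j] sgn_pos[of j k] by simp
          moreover have "\<not> \<epsilon> i k * \<epsilon> k j \<le> 0" using True p1 by (simp add: not_le)
          ultimately show ?thesis using True p1 ik jk
            by (simp add: cX_def mut_eps_def eps_hat_def add_divide_distrib)
        next
          case False
          then have "\<epsilon> j k \<ge> 0" using sgn_pos[of j k] sgn_pos[of k j] by linarith
          show ?thesis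
          proof (cases "\<epsilon> k j = 0")
            case True
            then have "\<epsilon> j k = 0" using sgn_pos[of j k] sgn_pos[of k j] sgn_pos[of j k] by linarith
            then show ?thesis using True p1 ik jk
              by (simp add: cX_def mut_eps_def eps_hat_def)
          next
            case False
            then have "\<epsilon> k j < 0" "\<epsilon> j k > 0" using \<open>\<not> \<epsilon> k j > 0\<close> sgn_pos[of k j] sgn_pos[of j k] by auto
            then have ne: "\<not> \<epsilon> i k * \<epsilon> k j > 0" using p1 by (simp add: zero_less_mult_iff)
            have "of_int (\<epsilon> j k) * (of_int (\<epsilon> i k) / of_int (d k)) = of_int (\<epsilon> i k) * (of_int (\<epsilon> j k) / of_int (d k) :: 'k)"
              by simp
            then show ?thesis using \<open>\<epsilon> j k > 0\<close> p1 ik jk ne sk1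
              by (simp add: cX_def mut_eps_def eps_hat_def add_divide_distrib)
          qed
        qed
      next
        case n1: False
        show "eps_hat \<epsilon> d i j + of_int (cX \<epsilon> k j) * eps_hat \<epsilon> d i k + of_int (cX \<epsilon> k i) * eps_hat \<epsilon> d k j =
          (eps_hat (mut_eps \<epsilon> k) d i j :: 'k)"
        proof (cases "\<epsilon> k j < 0 \<and> \<epsilon> i k < 0")
          case True
          then have "\<epsilon> j k > 0" using sgn_pos[of k j] sgn_pos[of j k] by simp
          have pp: "\<epsilon> i k * \<epsilon> k j > 0" using True by (simp add: zero_less_mult_iff)
          have "of_int (\<epsilon> j k) * (of_int (\<epsilon> i k) / of_int (d k)) = of_int (\<epsilon> i k) * (of_int (\<epsilon> j k) / of_int (d k) :: 'k)"
            by simp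
          then show ?thesis using \<open>\<epsilon> j k > 0\<close> True ik jk pp sk1
            by (simp add: cX_def mut_eps_def eps_hat_def add_divide_distrib diff_divide_distrib)
        next
          case False
          then have z: "max (\<epsilon> j k) 0 * \<epsilon> i k = 0"
            using n1 sgn_pos[of k j] sgn_pos[of j k] sgn_pos[of k j] by (cases "\<epsilon> i k = 0") auto
          have ne: "\<not> \<epsilon> i k * \<epsilon> k j > 0" using False n1 by (auto simp: zero_less_mult_iff)
          have "(of_int (max (\<epsilon> j k) 0) :: 'k) * of_int (\<epsilon> i k) = 0"
            using z by (metis of_int_0 of_int_mult)
          then show ?thesis using n1 ik jk ne
            by (simp add: cX_def mut_eps_def eps_hat_def dnz)
        qed
      qed
    qed
  qed
qed

end



lemma bilD:
  fixes \<epsilon> :: "'i::finite \<Rightarrow> 'i \<Rightarrow> int"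
  shows "bil (omegaD \<epsilon> d :: ('i+'i) \<Rightarrow> ('i+'i) \<Rightarrow> 'k::field) a b =
    bil (eps_hat \<epsilon> d) (a \<circ> Inr) (b \<circ> Inr) +
    (\<Sum>i\<in>UNIV. (of_int (a (Inr i)) * of_int (b (Inl i)) - of_int (a (Inl i)) * of_int (b (Inr i))) / of_int (d i))"
proof -
  have ifz: "\<And>P (x::'k) y. (if P then x else 0) * y = (if P then x * y else 0)" by simp
  have U: "(UNIV :: ('i+'i) set) = UNIV <+> UNIV" by simp
  show ?thesis
    unfolding bil_def
    apply (subst U)+
    apply (simp only: sum.Plus[OF finite finite] o_def)
    apply (simp add: omegaD_def sum.distrib diff_divide_distrib sum_subtractf ifz sum_negf)
    done
qed

definition LB :: "('i \<Rightarrow> 'i \<Rightarrow> int) \<Rightarrow> 'i \<Rightarrow> 'i \<Rightarrow> 'i \<Rightarrow> int" where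
  "LB \<epsilon> k w j = (if w = k then (if \<epsilon> k j < 0 then - \<epsilon> k j else 0) - (if j = k then 1 else 0)
      else (if j = w then 1 else 0))"

lemma muD_Inl: "muD \<epsilon> k (Inl w) = (\<lambda>v. case v of Inl j \<Rightarrow> LB \<epsilon> k w j | Inr j \<Rightarrow> 0)"
  by (rule ext) (auto simp: muD_def LB_def split: sum.split)

lemma muD_Inr: "muD \<epsilon> k (Inr w) = (\<lambda>v. case v of Inl j \<Rightarrow> 0 | Inr j \<Rightarrow> muX \<epsilon> k w j)"
  by (rule ext) (auto simp: muD_def muX_def split: sum.split)

lemma bil_zero: "bil \<Omega> (\<lambda>_. 0) b = 0" "bil \<Omega> a (\<lambda>_. 0) = 0"
  by (simp_all add: bil_def)

context
  fixes \<epsilon> :: "'i::finite \<Rightarrow> 'i \<Rightarrow> int" and d :: "'i \<Rightarrow> int"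
  assumes feed: "is_feed \<epsilon> d"
begin

lemma cross:
  "(\<Sum>i\<in>UNIV. of_int (muX \<epsilon> k w1 i) * of_int (LB \<epsilon> k w2 i) / of_int (d i) :: 'k::field_char_0)
   = (if w1 = w2 then 1 / of_int (d w1) else 0)"
proof -
  define F where "F i = (of_int (LB \<epsilon> k w2 i) / of_int (d i) :: 'k)" for i
  have "(\<Sum>i\<in>UNIV. of_int (muX \<epsilon> k w1 i) * of_int (LB \<epsilon> k w2 i) / of_int (d i) :: 'k)
      = (\<Sum>i\<in>UNIV. F i * of_int (muX \<epsilon> k w1 i))"
    by (simp add: F_def mult_ac)
  also have "\<dots> = F w1 + of_int (cX \<epsilon> k w1) * F k"
    unfolding muX_alt[OF feed] by (rule sum_delta2)
  also have "\<dots> = (if w1 = w2 then 1 / of_int (d w1) else 0)"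
  proof (cases "w1 = k")
    case True
    then show ?thesis by (cases "w2 = k") (auto simp: F_def LB_def cX_def ekk[OF feed])
  next
    case w1: False
    show ?thesis
    proof (cases "w2 = k")
      case False
      then show ?thesis using w1 by (auto simp: F_def LB_def cX_def)
    next
      case w2: True
      have sk: "(of_int (\<epsilon> w1 k) / of_int (d k) :: 'k) = - (of_int (\<epsilon> k w1) / of_int (d w1))"
        by (rule skq[OF feed])
      show ?thesis
      proof (cases "\<epsilon> w1 k > 0")
        case True
        then have "\<epsilon> k w1 < 0" using sgn_pos[OF feed, of k w1] sgn_pos[OF feed, of w1 k] by simp
        then show ?thesis using True w1 w2 sk by (simp add: F_def LB_def cX_def ekk[OF feed])
      next
        case False
        then have "\<not> \<epsilon> k w1 < 0" using sgn_pos[OF feed, of k w1] sgn_pos[OF feed, of w1 k] by simp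
        then show ?thesis using False w1 w2 by (simp add: F_def LB_def cX_def ekk[OF feed])
      qed
    qed
  qed
  finally show ?thesis .
qed

lemma D_entry:
  "bil (omegaD \<epsilon> d :: ('i+'i) \<Rightarrow> ('i+'i) \<Rightarrow> 'k::field_char_0) (muD \<epsilon> k u1) (muD \<epsilon> k u2)
    = omegaD (mut_eps \<epsilon> k) d u1 u2"
proof (cases u1; cases u2)
  fix w1 w2 assume u: "u1 = Inl w1" "u2 = Inl w2"
  show ?thesis unfolding u bilD by (simp add: muD_Inl o_def bil_zero omegaD_def)
next
  fix w1 w2 assume u: "u1 = Inl w1" "u2 = Inr w2"
  have "(\<Sum>i\<in>UNIV. (0 - of_int (LB \<epsilon> k w1 i) * of_int (muX \<epsilon> k w2 i)) / of_int (d i) :: 'k)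
     = - (\<Sum>i\<in>UNIV. of_int (muX \<epsilon> k w2 i) * of_int (LB \<epsilon> k w1 i) / of_int (d i))"
    by (simp add: sum_negf[symmetric] mult_ac)
  then show ?thesis unfolding u bilD
    by (simp add: muD_Inl muD_Inr o_def bil_zero omegaD_def cross)
next
  fix w1 w2 assume u: "u1 = Inr w1" "u2 = Inl w2"
  show ?thesis unfolding u bilD
    by (simp add: muD_Inl muD_Inr o_def bil_zero omegaD_def cross)
next
  fix w1 w2 assume u: "u1 = Inr w1" "u2 = Inr w2"
  have e: "(\<lambda>x. muX \<epsilon> k w1 x) = muX \<epsilon> k w1" "(\<lambda>x. muX \<epsilon> k w2 x) = muX \<epsilon> k w2" by auto
  have r: "muD \<epsilon> k (Inr w) \<circ> Inr = muX \<epsilon> k w" for w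
    by (rule ext) (simp add: muD_Inr)
  have z: "muD \<epsilon> k (Inr w) (Inl i) = 0" for w i by (simp add: muD_Inr)
  have o: "omegaD (mut_eps \<epsilon> k) d (Inr w1) (Inr w2) = (eps_hat (mut_eps \<epsilon> k) d w1 w2 :: 'k)"
    by (simp add: omegaD_def)
  show ?thesis unfolding u bilD r z o X_entry[OF feed] by simp
qed


end



theorem corollary2p9:
  fixes \<epsilon> :: "'i::finite \<Rightarrow> 'i \<Rightarrow> int" and d :: "'i \<Rightarrow> int" and k :: 'i
  assumes "is_feed \<epsilon> d"
  shows "poisson_map (omegaD \<epsilon> d :: ('i + 'i) \<Rightarrow> ('i + 'i) \<Rightarrow> 'k::field_char_0)
            (omegaD (mut_eps \<epsilon> k) d) (muD \<epsilon> k)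
       \<and> poisson_map (omegaX \<epsilon> d :: 'i \<Rightarrow> 'i \<Rightarrow> 'k)
            (omegaX (mut_eps \<epsilon> k) d) (muX \<epsilon> k)"
proof
  show "poisson_map (omegaD \<epsilon> d :: ('i + 'i) \<Rightarrow> ('i + 'i) \<Rightarrow> 'k::field_char_0)
            (omegaD (mut_eps \<epsilon> k) d) (muD \<epsilon> k)"
    by (rule poisson_of_entries) (rule D_entry[OF assms])
  show "poisson_map (omegaX \<epsilon> d :: 'i \<Rightarrow> 'i \<Rightarrow> 'k)
            (omegaX (mut_eps \<epsilon> k) d) (muX \<epsilon> k)"
    unfolding omegaX_def by (rule poisson_of_entries) (rule X_entry[OF assms])
qed

end
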